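(* Let $n\ge 3$ and let $L^B$ be a blow-up of the Boolean lattice $L\cong\mathbf{2}^n$. Then: (1) $L^B$ and its dual lattice $(L^B)^{\partial}$ are both pseudocomplemented; (2) $[L^B]\cong[(L^B)^{\partial}]\cong L\cong \mathbf{2}^n$; (3) for $a,b\in L^B$, $a^{\perp}=b^{\perp}$ if and only if $a^*=b^*$, where $a^*,b^*$ denote the pseudocomplements of $a,b$ in $L^B$.
   Context: Blow-up: Let $L\cong\mathbf{2}^n$ be a Boolean lattice with atoms $q_1,\dots,q_n$. A blow-up $L^B$ of $L$ is obtained by replacing each element $a\in L\setminus\{0,1\}$ by a finite chain $C_a$: $a=a^{1}\lessdot a^{2}\lessdot\cdots\lessdot a^{k_a}$ ($k_a\ge1$), keeping $0$ and $1$ as single elements; the order is: elements of the same chain $C_a$ are ordered along the chain, and for $u\in C_a$, $v\in C_b$ with $a\neq b$ (where $C_0=\{0\}$, $C_1=\{1\}$), $u\le v$ iff $a<b$ in $L$. In a poset $P$ with $0$, $a^{\perp}=\{b\in P:\{a,b\}^{\ell}=\{0\}\}$, where $\{a,b\}^\ell$ is the set of common lower bounds. The pseudocomplement $a^*$ of $a$ is the (unique if it exists) element with $\{a,a^*\}^{\ell}=\{0\}$ and such that $\{a,x\}^{\ell}=\{0\}$ implies $x\le a^*$; $P$ is pseudocomplemented if every element has one. For a lattice $M$ with $0$, $x\sim y$ iff $x^{\perp}=y^{\perp}$; $[x]$ is the class of $x$, and $[M]=\{[x]:x\in M\}$ is ordered by $[a]\le[b]$ iff $b^{\perp}\subseteq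 a^{\perp}$. *)

theory Defs
  imports Main
begin

definition lower_bounds :: "'a set \<Rightarrow> ('a \<Rightarrow> 'a \<Rightarrow> bool) \<Rightarrow> 'a set \<Rightarrow> 'a set" where
  "lower_bounds P le S = {x \<in> P. \<forall>s\<in>S. le x s}"

definition perp :: "'a set \<Rightarrow> ('a \<Rightarrow> 'a \<Rightarrow> bool) \<Rightarrow> 'a \<Rightarrow> 'a \<Rightarrow> 'a set" where
  "perp P le z a = {b \<in> P. lower_bounds P le {a, b} = {z}}"

definition is_pseudocomplement :: "'a set \<Rightarrow> ('a \<Rightarrow> 'a \<Rightarrow> bool) \<Rightarrow> 'a \<Rightarrow> 'a \<Rightarrow> 'a \<Rightarrow> bool" where
  "is_pseudocomplement P le z a c \<longleftrightarrow>
     c \<in> P \<and> lower_bounds P le {a, c} = {z} \<and>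
     (\<forall>x\<in>P. lower_bounds P le {a, x} = {z} \<longrightarrow> le x c)"

definition pseudocomplemented :: "'a set \<Rightarrow> ('a \<Rightarrow> 'a \<Rightarrow> bool) \<Rightarrow> 'a \<Rightarrow> bool" where
  "pseudocomplemented P le z \<longleftrightarrow> (\<forall>a\<in>P. \<exists>c. is_pseudocomplement P le z a c)"

definition pcompl :: "'a set \<Rightarrow> ('a \<Rightarrow> 'a \<Rightarrow> bool) \<Rightarrow> 'a \<Rightarrow> 'a \<Rightarrow> 'a" where
  "pcompl P le z a = (THE c. is_pseudocomplement P le z a c)"

definition perp_class :: "'a set \<Rightarrow> ('a \<Rightarrow> 'a \<Rightarrow> bool) \<Rightarrow> 'a \<Rightarrow> 'a \<Rightarrow> 'a set" where
  "perp_class P le z x = {y \<in> P. perp P le z y = perp P le z x}"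

definition perp_classes :: "'a set \<Rightarrow> ('a \<Rightarrow> 'a \<Rightarrow> bool) \<Rightarrow> 'a \<Rightarrow> 'a set set" where
  "perp_classes P le z = perp_class P le z ` P"

definition class_le :: "'a set \<Rightarrow> ('a \<Rightarrow> 'a \<Rightarrow> bool) \<Rightarrow> 'a \<Rightarrow> 'a set \<Rightarrow> 'a set \<Rightarrow> bool" where
  "class_le P le z X Y \<longleftrightarrow> (\<forall>a\<in>X. \<forall>b\<in>Y. perp P le z b \<subseteq> perp P le z a)"

definition order_isomorphic :: "'a set \<Rightarrow> ('a \<Rightarrow> 'a \<Rightarrow> bool) \<Rightarrow> 'b set \<Rightarrow> ('b \<Rightarrow> 'b \<Rightarrow> bool) \<Rightarrow> bool" where
  "order_isomorphic A leA B leB \<longleftrightarrow>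
     (\<exists>f. bij_betw f A B \<and> (\<forall>x\<in>A. \<forall>y\<in>A. leA x y \<longleftrightarrow> leB (f x) (f y)))"

text \<open>L = 2^n is modelled as the powerset of {0..<n} ordered by inclusion
  (atoms q_i = {i}). A blow-up is determined by chain lengths k A >= 1 for
  A \<noteq> {}, {0..<n}; the element a^i of chain C_a is the pair (a, i), 1 <= i <= k a;
  0 and 1 are the single elements ({},1) and ({0..<n},1).\<close>

definition boolean_carrier :: "nat \<Rightarrow> nat set set" where
  "boolean_carrier n = Pow {..<n}"

definition chain_len :: "nat \<Rightarrow> (nat set \<Rightarrow> nat) \<Rightarrow> nat set \<Rightarrow> nat" where
  "chain_len n k A = (if A = {} \<or> A = {..<n} then 1 else k A)"

definition blowup_carrier :: "nat \<Rightarrow> (nat set \<Rightarrow> nat) \<Rightarrow> (nat set \<times> nat) set" where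
  "blowup_carrier n k = {(A, i). A \<subseteq> {..<n} \<and> 1 \<le> i \<and> i \<le> chain_len n k A}"

definition blowup_le :: "nat set \<times> nat \<Rightarrow> nat set \<times> nat \<Rightarrow> bool" where
  "blowup_le u v \<longleftrightarrow> (fst u = fst v \<and> snd u \<le> snd v) \<or> fst u \<subset> fst v"

definition blowup_bot :: "nat set \<times> nat" where
  "blowup_bot = ({}, 1)"

definition blowup_top :: "nat \<Rightarrow> nat set \<times> nat" where
  "blowup_top n = ({..<n}, 1)"

definition blowup_dual_le :: "nat set \<times> nat \<Rightarrow> nat set \<times> nat \<Rightarrow> bool" where
  "blowup_dual_le u v \<longleftrightarrow> blowup_le v u"

end

theory Submission
  imports Defs
begin

lemma le_fst: "blowup_le u v \<Longrightarrow> fst u \<subseteq> fst v" by (auto simp: blowup_le_def)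

lemma bij_aux: "inj_on (\<lambda>A. f (g A)) P \<Longrightarrow> (\<lambda>A. f (g A)) ` P = Q \<Longrightarrow> bij_betw f (g ` P) Q"
  unfolding bij_betw_def inj_on_def by auto

context
  fixes n :: nat and k :: "nat set \<Rightarrow> nat"
  assumes n3: "n \<ge> 3"
    and k_pos: "\<And>A. A \<subseteq> {..<n} \<Longrightarrow> A \<noteq> {} \<Longrightarrow> A \<noteq> {..<n} \<Longrightarrow> 1 \<le> k A"
begin

lemma cl_pos: "A \<subseteq> {..<n} \<Longrightarrow> 1 \<le> chain_len n k A"
  using k_pos by (auto simp: chain_len_def)

lemma mem1: "A \<subseteq> {..<n} \<Longrightarrow> (A, 1) \<in> blowup_carrier n k"
  using cl_pos by (auto simp: blowup_carrier_def)

lemma memtop: "A \<subseteq> {..<n} \<Longrightarrow> (A, chain_len n k A) \<in> blowup_carrier n k"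
  using cl_pos by (auto simp: blowup_carrier_def)

lemma memD: "x \<in> blowup_carrier n k \<Longrightarrow> fst x \<subseteq> {..<n} \<and> 1 \<le> snd x \<and> snd x \<le> chain_len n k (fst x)"
  by (auto simp: blowup_carrier_def)

lemma empty_snd: "x \<in> blowup_carrier n k \<Longrightarrow> fst x = {} \<Longrightarrow> x = blowup_bot"
  by (cases x) (auto simp: blowup_carrier_def chain_len_def blowup_bot_def)

lemma full_snd: "x \<in> blowup_carrier n k \<Longrightarrow> fst x = {..<n} \<Longrightarrow> x = blowup_top n"
  by (cases x) (auto simp: blowup_carrier_def chain_len_def blowup_top_def)

lemma L1:
  assumes a: "a \<in> blowup_carrier n k" and b: "b \<in> blowup_carrier n k"
  shows "lower_bounds (blowup_carrier n k) blowup_le {a, b} = {blowup_bot} \<longleftrightarrow> fst a \<inter> fst b = {}"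
proof
  assume H: "lower_bounds (blowup_carrier n k) blowup_le {a, b} = {blowup_bot}"
  show "fst a \<inter> fst b = {}"
  proof (rule ccontr)
    assume ne: "fst a \<inter> fst b \<noteq> {}"
    obtain A i B j where ab: "a = (A,i)" "b = (B,j)" by (cases a, cases b)
    have "\<exists>x \<in> blowup_carrier n k. blowup_le x a \<and> blowup_le x b \<and> fst x \<noteq> {}"
    proof (cases "A = B")
      case True
      then show ?thesis using a b ab ne
        by (intro bexI[of _ "(A, min i j)"]) (auto simp: blowup_le_def blowup_carrier_def)
    next
      case False
      show ?thesis
      proof (cases "A \<subset> B")
        case True then show ?thesis using a b ab ne
          by (intro bexI[of _ a]) (auto simp: blowup_le_def)
      next
        case F2: False
        show ?thesis
        proof (cases "B \<subset> A")
          case True then show ?thesis using a b ab ne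
            by (intro bexI[of _ b]) (auto simp: blowup_le_def)
        next
          case F3: False
          have "A \<inter> B \<subseteq> {..<n}" using a ab memD by fastforce
          then show ?thesis using mem1[of "A \<inter> B"] ab ne False F2 F3
            by (intro bexI[of _ "(A \<inter> B, 1)"]) (auto simp: blowup_le_def)
        qed
      qed
    qed
    then obtain x where "x \<in> lower_bounds (blowup_carrier n k) blowup_le {a, b}" "fst x \<noteq> {}"
      by (auto simp: lower_bounds_def)
    with H show False by (auto simp: blowup_bot_def)
  qed
next
  assume D: "fst a \<inter> fst b = {}"
  have bot: "blowup_bot \<in> blowup_carrier n k" using mem1[of "{}"] by (simp add: blowup_bot_def)
  show "lower_bounds (blowup_carrier n k) blowup_le {a, b} = {blowup_bot}"
  proof (intro equalityI subsetI)
    fix x assume "x \<in> lower_bounds (blowup_carrier n k) blowup_le {a, b}"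
    then have "x \<in> blowup_carrier n k" "fst x \<subseteq> fst a" "fst x \<subseteq> fst b"
      by (auto simp: lower_bounds_def dest: le_fst)
    then show "x \<in> {blowup_bot}" using D empty_snd by blast
  next
    fix x assume "x \<in> {blowup_bot}"
    then show "x \<in> lower_bounds (blowup_carrier n k) blowup_le {a, b}"
      using bot a b empty_snd[of a] empty_snd[of b]
      by (auto simp: lower_bounds_def blowup_le_def blowup_bot_def)
  qed
qed

lemma L2:
  assumes a: "a \<in> blowup_carrier n k" and b: "b \<in> blowup_carrier n k"
  shows "lower_bounds (blowup_carrier n k) blowup_dual_le {a, b} = {blowup_top n} \<longleftrightarrow> fst a \<union> fst b = {..<n}"
proof
  assume H: "lower_bounds (blowup_carrier n k) blowup_dual_le {a, b} = {blowup_top n}"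
  have sa: "fst a \<subseteq> {..<n}" "fst b \<subseteq> {..<n}" using a b memD by auto
  show "fst a \<union> fst b = {..<n}"
  proof (rule ccontr)
    assume ne: "fst a \<union> fst b \<noteq> {..<n}"
    obtain A i B j where ab: "a = (A,i)" "b = (B,j)" by (cases a, cases b)
    have "\<exists>x \<in> blowup_carrier n k. blowup_le a x \<and> blowup_le b x \<and> fst x \<noteq> {..<n}"
    proof (cases "A = B")
      case True
      then show ?thesis using a b ab ne
        by (intro bexI[of _ "(A, max i j)"]) (auto simp: blowup_le_def blowup_carrier_def)
    next
      case False
      show ?thesis
      proof (cases "A \<subset> B")
        case True then show ?thesis using a b ab ne
          by (intro bexI[of _ b]) (auto simp: blowup_le_def)
      next
        case F2: False
        show ?thesis
        proof (cases "B \<subset> A")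
          case True then show ?thesis using a b ab ne
            by (intro bexI[of _ a]) (auto simp: blowup_le_def)
        next
          case F3: False
          have "A \<union> B \<subseteq> {..<n}" using sa ab by auto
          then show ?thesis using mem1[of "A \<union> B"] ab ne False F2 F3
            by (intro bexI[of _ "(A \<union> B, 1)"]) (auto simp: blowup_le_def)
        qed
      qed
    qed
    then obtain x where "x \<in> lower_bounds (blowup_carrier n k) blowup_dual_le {a, b}" "fst x \<noteq> {..<n}"
      by (auto simp: lower_bounds_def blowup_dual_le_def)
    with H show False by (auto simp: blowup_top_def)
  qed
next
  assume D: "fst a \<union> fst b = {..<n}"
  have top: "blowup_top n \<in> blowup_carrier n k" using mem1[of "{..<n}"] by (simp add: blowup_top_def)
  have sa: "fst a \<subseteq> {..<n}" "fst b \<subseteq> {..<n}" using a b memD by auto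
  show "lower_bounds (blowup_carrier n k) blowup_dual_le {a, b} = {blowup_top n}"
  proof (intro equalityI subsetI)
    fix x assume "x \<in> lower_bounds (blowup_carrier n k) blowup_dual_le {a, b}"
    then have "x \<in> blowup_carrier n k" "fst a \<subseteq> fst x" "fst b \<subseteq> fst x"
      by (auto simp: lower_bounds_def blowup_dual_le_def dest: le_fst)
    moreover then have "fst x \<subseteq> {..<n}" using memD by blast
    ultimately show "x \<in> {blowup_top n}" using D full_snd by blast
  next
    fix x assume "x \<in> {blowup_top n}"
    then show "x \<in> lower_bounds (blowup_carrier n k) blowup_dual_le {a, b}"
      using top a b sa full_snd[of a] full_snd[of b]
      by (auto simp: lower_bounds_def blowup_le_def blowup_top_def blowup_dual_le_def)
  qed
qed

lemma perp1: "a \<in> blowup_carrier n k \<Longrightarrow>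
  perp (blowup_carrier n k) blowup_le blowup_bot a = {b \<in> blowup_carrier n k. fst a \<inter> fst b = {}}"
  unfolding perp_def using L1[of a] by blast

lemma perp2: "a \<in> blowup_carrier n k \<Longrightarrow>
  perp (blowup_carrier n k) blowup_dual_le (blowup_top n) a = {b \<in> blowup_carrier n k. fst a \<union> fst b = {..<n}}"
  unfolding perp_def using L2[of a] by blast

lemma perp1_sub:
  assumes a: "a \<in> blowup_carrier n k" and b: "b \<in> blowup_carrier n k"
  shows "perp (blowup_carrier n k) blowup_le blowup_bot b \<subseteq> perp (blowup_carrier n k) blowup_le blowup_bot a
     \<longleftrightarrow> fst a \<subseteq> fst b"
proof
  assume S: "perp (blowup_carrier n k) blowup_le blowup_bot b \<subseteq> perp (blowup_carrier n k) blowup_le blowup_bot a"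
  have "({..<n} - fst b, 1) \<in> perp (blowup_carrier n k) blowup_le blowup_bot b"
    using perp1[OF b] mem1[of "{..<n} - fst b"] by auto
  with S have "({..<n} - fst b, 1) \<in> perp (blowup_carrier n k) blowup_le blowup_bot a" by blast
  then show "fst a \<subseteq> fst b" using perp1[OF a] memD[OF a] by auto
qed (auto simp: perp1[OF a] perp1[OF b])

lemma perp2_sub:
  assumes a: "a \<in> blowup_carrier n k" and b: "b \<in> blowup_carrier n k"
  shows "perp (blowup_carrier n k) blowup_dual_le (blowup_top n) b \<subseteq> perp (blowup_carrier n k) blowup_dual_le (blowup_top n) a
     \<longleftrightarrow> fst b \<subseteq> fst a"
proof
  assume S: "perp (blowup_carrier n k) blowup_dual_le (blowup_top n) b \<subseteq> perp (blowup_carrier n k) blowup_dual_le (blowup_top n) a"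
  have "({..<n} - fst b, 1) \<in> perp (blowup_carrier n k) blowup_dual_le (blowup_top n) b"
    using perp2[OF b] mem1[of "{..<n} - fst b"] memD[OF b] by auto
  with S have "({..<n} - fst b, 1) \<in> perp (blowup_carrier n k) blowup_dual_le (blowup_top n) a" by blast
  then show "fst b \<subseteq> fst a" using perp2[OF a] memD[OF a] memD[OF b] by auto
qed (use memD[OF a] in \<open>auto simp: perp2[OF a] perp2[OF b]\<close>)

definition "cls A = {y \<in> blowup_carrier n k. fst y = A}"

lemma cls_Union: "A \<subseteq> {..<n} \<Longrightarrow> \<Union>(fst ` cls A) = A"
  using mem1[of A] unfolding cls_def by force

lemma fst_C: "fst ` blowup_carrier n k = Pow {..<n}"
proof
  show "fst ` blowup_carrier n k \<subseteq> Pow {..<n}" using memD by blast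
  show "Pow {..<n} \<subseteq> fst ` blowup_carrier n k"
  proof
    fix A assume "A \<in> Pow {..<n}"
    then have "(A,1) \<in> blowup_carrier n k" using mem1 by auto
    then show "A \<in> fst ` blowup_carrier n k" by force
  qed
qed

lemma perp1_eq: "a \<in> blowup_carrier n k \<Longrightarrow> b \<in> blowup_carrier n k \<Longrightarrow>
  perp (blowup_carrier n k) blowup_le blowup_bot a = perp (blowup_carrier n k) blowup_le blowup_bot b \<longleftrightarrow> fst a = fst b"
  using perp1_sub[of a b] perp1_sub[of b a] by (metis subset_antisym order_refl)

lemma perp2_eq: "a \<in> blowup_carrier n k \<Longrightarrow> b \<in> blowup_carrier n k \<Longrightarrow>
  perp (blowup_carrier n k) blowup_dual_le (blowup_top n) a = perp (blowup_carrier n k) blowup_dual_le (blowup_top n) b \<longleftrightarrow> fst a = fst b"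
  using perp2_sub[of a b] perp2_sub[of b a] by (metis subset_antisym order_refl)

lemma pclass1: "x \<in> blowup_carrier n k \<Longrightarrow> perp_class (blowup_carrier n k) blowup_le blowup_bot x = cls (fst x)"
  unfolding perp_class_def cls_def using perp1_eq[of _ x] by auto

lemma pclass2: "x \<in> blowup_carrier n k \<Longrightarrow> perp_class (blowup_carrier n k) blowup_dual_le (blowup_top n) x = cls (fst x)"
  unfolding perp_class_def cls_def using perp2_eq[of _ x] by auto

lemma pclasses1: "perp_classes (blowup_carrier n k) blowup_le blowup_bot = cls ` Pow {..<n}"
proof -
  have "perp_classes (blowup_carrier n k) blowup_le blowup_bot = (\<lambda>x. cls (fst x)) ` blowup_carrier n k"
    unfolding perp_classes_def using pclass1 by (auto simp: image_iff)
  also have "\<dots> = cls ` (fst ` blowup_carrier n k)" by (simp add: image_image)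
  finally show ?thesis using fst_C by simp
qed

lemma pclasses2: "perp_classes (blowup_carrier n k) blowup_dual_le (blowup_top n) = cls ` Pow {..<n}"
proof -
  have "perp_classes (blowup_carrier n k) blowup_dual_le (blowup_top n) = (\<lambda>x. cls (fst x)) ` blowup_carrier n k"
    unfolding perp_classes_def using pclass2 by (auto simp: image_iff)
  also have "\<dots> = cls ` (fst ` blowup_carrier n k)" by (simp add: image_image)
  finally show ?thesis using fst_C by simp
qed

lemma cle1: assumes A: "A \<subseteq> {..<n}" and B: "B \<subseteq> {..<n}" shows "
   class_le (blowup_carrier n k) blowup_le blowup_bot (cls A) (cls B) \<longleftrightarrow> A \<subseteq> B"
proof
  assume "class_le (blowup_carrier n k) blowup_le blowup_bot (cls A) (cls B)"
  moreover have "(A,1) \<in> cls A" "(B,1) \<in> cls B" using mem1 A B by (auto simp: cls_def)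
  ultimately have "perp (blowup_carrier n k) blowup_le blowup_bot (B,1) \<subseteq> perp (blowup_carrier n k) blowup_le blowup_bot (A,1)"
    unfolding class_le_def by blast
  then show "A \<subseteq> B" using perp1_sub[OF mem1[OF A] mem1[OF B]] by simp
next
  assume "A \<subseteq> B"
  then show "class_le (blowup_carrier n k) blowup_le blowup_bot (cls A) (cls B)"
    unfolding class_le_def cls_def using perp1_sub by auto
qed

lemma cle2: assumes A: "A \<subseteq> {..<n}" and B: "B \<subseteq> {..<n}" shows "
   class_le (blowup_carrier n k) blowup_dual_le (blowup_top n) (cls A) (cls B) \<longleftrightarrow> B \<subseteq> A"
proof
  assume "class_le (blowup_carrier n k) blowup_dual_le (blowup_top n) (cls A) (cls B)"
  moreover have "(A,1) \<in> cls A" "(B,1) \<in> cls B" using mem1 A B by (auto simp: cls_def)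
  ultimately have "perp (blowup_carrier n k) blowup_dual_le (blowup_top n) (B,1) \<subseteq> perp (blowup_carrier n k) blowup_dual_le (blowup_top n) (A,1)"
    unfolding class_le_def by blast
  then show "B \<subseteq> A" using perp2_sub[OF mem1[OF A] mem1[OF B]] by simp
next
  assume "B \<subseteq> A"
  then show "class_le (blowup_carrier n k) blowup_dual_le (blowup_top n) (cls A) (cls B)"
    unfolding class_le_def cls_def using perp2_sub by auto
qed

lemma iso1: "order_isomorphic (perp_classes (blowup_carrier n k) blowup_le blowup_bot)
           (class_le (blowup_carrier n k) blowup_le blowup_bot) (boolean_carrier n) (\<subseteq>)"
  unfolding order_isomorphic_def pclasses1 boolean_carrier_def
proof (intro exI[of _ "\<lambda>X. \<Union>(fst ` X)"] conjI)
  show "bij_betw (\<lambda>X. \<Union> (fst ` X)) (cls ` Pow {..<n}) (Pow {..<n})"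
    by (rule bij_aux) (auto simp: inj_on_def cls_Union)
  show "\<forall>x\<in>cls ` Pow {..<n}. \<forall>y\<in>cls ` Pow {..<n}.
       class_le (blowup_carrier n k) blowup_le blowup_bot x y = (\<Union> (fst ` x) \<subseteq> \<Union> (fst ` y))"
  proof (intro ballI)
    fix x y assume "x \<in> cls ` Pow {..<n}" "y \<in> cls ` Pow {..<n}"
    then obtain A B where "A \<subseteq> {..<n}" "B \<subseteq> {..<n}" "x = cls A" "y = cls B" by auto
    then show "class_le (blowup_carrier n k) blowup_le blowup_bot x y = (\<Union> (fst ` x) \<subseteq> \<Union> (fst ` y))"
      using cle1 cls_Union by simp
  qed
qed

lemma iso2: "order_isomorphic (perp_classes (blowup_carrier n k) blowup_dual_le (blowup_top n))
           (class_le (blowup_carrier n k) blowup_dual_le (blowup_top n)) (boolean_carrier n) (\<subseteq>)"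
  unfolding order_isomorphic_def pclasses2 boolean_carrier_def
proof (intro exI[of _ "\<lambda>X. {..<n} - \<Union>(fst ` X)"] conjI)
  show "bij_betw (\<lambda>X. {..<n} - \<Union> (fst ` X)) (cls ` Pow {..<n}) (Pow {..<n})"
  proof (rule bij_aux)
    show "inj_on (\<lambda>A. {..<n} - \<Union> (fst ` cls A)) (Pow {..<n})"
      by (auto simp: inj_on_def cls_Union)
    show "(\<lambda>A. {..<n} - \<Union> (fst ` cls A)) ` Pow {..<n} = Pow {..<n}"
    proof
      show "(\<lambda>A. {..<n} - \<Union> (fst ` cls A)) ` Pow {..<n} \<subseteq> Pow {..<n}" by auto
      show "Pow {..<n} \<subseteq> (\<lambda>A. {..<n} - \<Union> (fst ` cls A)) ` Pow {..<n}"
      proof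
        fix B assume B: "B \<in> Pow {..<n}"
        then have "B = {..<n} - \<Union> (fst ` cls ({..<n} - B))" using cls_Union[of "{..<n} - B"] by auto
        then show "B \<in> (\<lambda>A. {..<n} - \<Union> (fst ` cls A)) ` Pow {..<n}" by blast
      qed
    qed
  qed
  show "\<forall>x\<in>cls ` Pow {..<n}. \<forall>y\<in>cls ` Pow {..<n}.
       class_le (blowup_carrier n k) blowup_dual_le (blowup_top n) x y = ({..<n} - \<Union> (fst ` x) \<subseteq> {..<n} - \<Union> (fst ` y))"
  proof (intro ballI)
    fix x y assume "x \<in> cls ` Pow {..<n}" "y \<in> cls ` Pow {..<n}"
    then obtain A B where "A \<subseteq> {..<n}" "B \<subseteq> {..<n}" "x = cls A" "y = cls B" by auto
    then show "class_le (blowup_carrier n k) blowup_dual_le (blowup_top n) x y = ({..<n} - \<Union> (fst ` x) \<subseteq> {..<n} - \<Union> (fst ` y))"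
      using cle2 cls_Union by auto
  qed
qed

definition "pc a = ({..<n} - fst a, chain_len n k ({..<n} - fst a))"

lemma pc_is: "a \<in> blowup_carrier n k \<Longrightarrow> is_pseudocomplement (blowup_carrier n k) blowup_le blowup_bot a (pc a)"
proof -
  assume a: "a \<in> blowup_carrier n k"
  have m: "pc a \<in> blowup_carrier n k" unfolding pc_def by (rule memtop) auto
  show ?thesis unfolding is_pseudocomplement_def
  proof (intro conjI ballI impI m)
    show "lower_bounds (blowup_carrier n k) blowup_le {a, pc a} = {blowup_bot}"
      using L1[OF a m] by (auto simp: pc_def)
    fix x assume x: "x \<in> blowup_carrier n k" and "lower_bounds (blowup_carrier n k) blowup_le {a, x} = {blowup_bot}"
    then have "fst a \<inter> fst x = {}" using L1[OF a x] by simp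
    then have "fst x \<subseteq> {..<n} - fst a" using memD[OF x] by auto
    then show "blowup_le x (pc a)" using memD[OF x] by (auto simp: pc_def blowup_le_def)
  qed
qed

lemma pc_uniq: assumes a: "a \<in> blowup_carrier n k"
  and c: "is_pseudocomplement (blowup_carrier n k) blowup_le blowup_bot a c" shows "c = pc a"
proof -
  have cm: "c \<in> blowup_carrier n k" and l: "lower_bounds (blowup_carrier n k) blowup_le {a, c} = {blowup_bot}"
    and mx: "\<forall>x\<in>blowup_carrier n k. lower_bounds (blowup_carrier n k) blowup_le {a, x} = {blowup_bot} \<longrightarrow> blowup_le x c"
    using c unfolding is_pseudocomplement_def by auto
  have "fst c \<subseteq> {..<n} - fst a" using L1[OF a cm] l memD[OF cm] by auto
  moreover have "blowup_le (pc a) c" using mx pc_is[OF a] unfolding is_pseudocomplement_def by blast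
  ultimately have "fst c = {..<n} - fst a" "chain_len n k ({..<n} - fst a) \<le> snd c"
    by (auto simp: pc_def blowup_le_def)
  then show ?thesis using memD[OF cm] by (cases c) (auto simp: pc_def)
qed

lemma pcompl_eq: "a \<in> blowup_carrier n k \<Longrightarrow> pcompl (blowup_carrier n k) blowup_le blowup_bot a = pc a"
  unfolding pcompl_def using pc_is pc_uniq by (rule the_equality)

lemma pc_dual: "a \<in> blowup_carrier n k \<Longrightarrow> is_pseudocomplement (blowup_carrier n k) blowup_dual_le (blowup_top n) a ({..<n} - fst a, 1)"
proof -
  assume a: "a \<in> blowup_carrier n k"
  have m: "({..<n} - fst a, 1) \<in> blowup_carrier n k" by (rule mem1) auto
  show ?thesis unfolding is_pseudocomplement_def
  proof (intro conjI ballI impI m)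
    show "lower_bounds (blowup_carrier n k) blowup_dual_le {a, ({..<n} - fst a, 1)} = {blowup_top n}"
      using L2[OF a m] memD[OF a] by auto
    fix x assume x: "x \<in> blowup_carrier n k" and "lower_bounds (blowup_carrier n k) blowup_dual_le {a, x} = {blowup_top n}"
    then have "fst a \<union> fst x = {..<n}" using L2[OF a x] by simp
    then have "{..<n} - fst a \<subseteq> fst x" by auto
    then show "blowup_dual_le x ({..<n} - fst a, 1)" using memD[OF x]
      by (auto simp: blowup_dual_le_def blowup_le_def)
  qed
qed

lemma part5: "a \<in> blowup_carrier n k \<Longrightarrow> b \<in> blowup_carrier n k \<Longrightarrow>
  perp (blowup_carrier n k) blowup_le blowup_bot a = perp (blowup_carrier n k) blowup_le blowup_bot b
  \<longleftrightarrow> pcompl (blowup_carrier n k) blowup_le blowup_bot a = pcompl (blowup_carrier n k) blowup_le blowup_bot b"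
proof -
  assume a: "a \<in> blowup_carrier n k" and b: "b \<in> blowup_carrier n k"
  have "perp (blowup_carrier n k) blowup_le blowup_bot a = perp (blowup_carrier n k) blowup_le blowup_bot b
     \<longleftrightarrow> fst a = fst b" using perp1_eq[OF a b] .
  also have "\<dots> \<longleftrightarrow> pc a = pc b"
    using memD[OF a] memD[OF b] by (auto simp: pc_def)
  finally show ?thesis using pcompl_eq a b by simp
qed

end

theorem mainTheorem3:
  fixes n :: nat and k :: "nat set \<Rightarrow> nat"
  assumes n3: "n \<ge> 3"
    and k_pos: "\<And>A. A \<subseteq> {..<n} \<Longrightarrow> A \<noteq> {} \<Longrightarrow> A \<noteq> {..<n} \<Longrightarrow> 1 \<le> k A"
  shows "pseudocomplemented (blowup_carrier n k) blowup_le blowup_bot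
       \<and> pseudocomplemented (blowup_carrier n k) blowup_dual_le (blowup_top n)
       \<and> order_isomorphic
           (perp_classes (blowup_carrier n k) blowup_le blowup_bot)
           (class_le (blowup_carrier n k) blowup_le blowup_bot)
           (boolean_carrier n) (\<subseteq>)
       \<and> order_isomorphic
           (perp_classes (blowup_carrier n k) blowup_dual_le (blowup_top n))
           (class_le (blowup_carrier n k) blowup_dual_le (blowup_top n))
           (boolean_carrier n) (\<subseteq>)
       \<and> (\<forall>a\<in>blowup_carrier n k. \<forall>b\<in>blowup_carrier n k.
            perp (blowup_carrier n k) blowup_le blowup_bot a
              = perp (blowup_carrier n k) blowup_le blowup_bot b
            \<longleftrightarrow> pcompl (blowup_carrier n k) blowup_le blowup_bot a
              = pcompl (blowup_carrier n k) blowup_le blowup_bot b)"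
proof (intro conjI ballI)
  show "pseudocomplemented (blowup_carrier n k) blowup_le blowup_bot"
    unfolding pseudocomplemented_def
  proof
    fix a assume a: "a \<in> blowup_carrier n k"
    show "\<exists>c. is_pseudocomplement (blowup_carrier n k) blowup_le blowup_bot a c"
      using pc_is[OF n3 k_pos a] by (rule exI)
  qed
  show "pseudocomplemented (blowup_carrier n k) blowup_dual_le (blowup_top n)"
    unfolding pseudocomplemented_def
  proof
    fix a assume a: "a \<in> blowup_carrier n k"
    show "\<exists>c. is_pseudocomplement (blowup_carrier n k) blowup_dual_le (blowup_top n) a c"
      using pc_dual[OF n3 k_pos a] by (rule exI)
  qed
  show "order_isomorphic
           (perp_classes (blowup_carrier n k) blowup_le blowup_bot)
           (class_le (blowup_carrier n k) blowup_le blowup_bot)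
           (boolean_carrier n) (\<subseteq>)" by (rule iso1[OF n3 k_pos])
  show "order_isomorphic
           (perp_classes (blowup_carrier n k) blowup_dual_le (blowup_top n))
           (class_le (blowup_carrier n k) blowup_dual_le (blowup_top n))
           (boolean_carrier n) (\<subseteq>)" by (rule iso2[OF n3 k_pos])
  fix a b assume ab: "a \<in> blowup_carrier n k" "b \<in> blowup_carrier n k"
  show "perp (blowup_carrier n k) blowup_le blowup_bot a
              = perp (blowup_carrier n k) blowup_le blowup_bot b
            \<longleftrightarrow> pcompl (blowup_carrier n k) blowup_le blowup_bot a
              = pcompl (blowup_carrier n k) blowup_le blowup_bot b"
    by (rule part5[OF n3 k_pos ab])
qed

end
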